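(* Let $p,q$ be distinct positive integers and $n\ge 1$. For every state $x=(x_1,\dots,x_n)\in\{p,q\}^n$, every sequence $s=(s_1,\dots,s_m)$ of elements of $\{p,q\}$ with $m\ge 1$, and every $k\in\{1,\dots,m\}$, $$RLD^{p,q}_n(x, s_{1:m}) = RLD^{p,q}_n(x, s_{1:k}) \circ RLD^{p,q}_n\big(A^{p,q}_n(x, s_{1:k}), s_{k+1:m}\big),$$ where $\circ$ denotes concatenation of finite sequences, $s_{i:j}=(s_i,\dots,s_j)$, and $s_{k+1:m}$ is the empty sequence when $k=m$.
   Context: Let $p,q$ be distinct positive integers. Define $\mathrm{Opp}(p)=q$, $\mathrm{Opp}(q)=p$. For $x\in\{p,q\}$ and a finite sequence $s=(s_1,\dots,s_m)$ of positive integers, the run-length decoding $RLD^{p,q}(x,s)$ is the sequence over $\{p,q\}$ consisting of $s_1$ copies of $x$, followed by $s_2$ copies of $\mathrm{Opp}(x)$, followed by $s_3$ copies of $x$, and so on alternately (so it begins with $x$ and has run lengths $s_1,\dots,s_m$); the decoding of the empty sequence is empty. For $n\ge1$ and $x=(x_1,\dots,x_n)\in\{p,q\}^n$, the $n$-iterated decoding is defined by $RLD^{p,q}_1(x_1,s)=RLD^{p,q}(x_1,s)$ and $RLD^{p,q}_n(x_{1:n},s)=RLD^{p,q}(x_n, RLD^{p,q}_{n-1}(x_{1:n-1},s))$. For a nonempty sequence $t$ over $\{p,q\}$, $\mathrm{OppEnd}(t)=\mathrm{Opp}(\text{last entry of } t)$. The automaton $A^{p,q}_n$ has state set $\{p,q\}^n$;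 for a state $x$ and a nonempty finite sequence $s$ over $\{p,q\}$, $A^{p,q}_n(x,s)\in\{p,q\}^n$ is the state whose $i$-th coordinate is $\mathrm{OppEnd}(RLD^{p,q}_i(x_{1:i},s))$ for $i=1,\dots,n$. *)

theory Defs
  imports Main
begin

definition Opp :: "nat \<Rightarrow> nat \<Rightarrow> nat \<Rightarrow> nat" where
  "Opp p q x = (if x = p then q else p)"

fun RLD :: "nat \<Rightarrow> nat \<Rightarrow> nat \<Rightarrow> nat list \<Rightarrow> nat list" where
  "RLD p q x [] = []"
| "RLD p q x (a # s) = replicate a x @ RLD p q (Opp p q x) s"

text \<open>n-iterated decoding: RLD_n(x_1..x_n, s) = RLD(x_n, RLD_(n-1)(x_1..x_(n-1), s)),
  RLD_1(x_1,s) = RLD(x_1,s). The state is a list [x_1,...,x_n].\<close>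
definition RLD_iter :: "nat \<Rightarrow> nat \<Rightarrow> nat list \<Rightarrow> nat list \<Rightarrow> nat list" where
  "RLD_iter p q xs s = foldl (\<lambda>t x. RLD p q x t) s xs"

definition OppEnd :: "nat \<Rightarrow> nat \<Rightarrow> nat list \<Rightarrow> nat" where
  "OppEnd p q t = Opp p q (last t)"

definition Aut :: "nat \<Rightarrow> nat \<Rightarrow> nat list \<Rightarrow> nat list \<Rightarrow> nat list" where
  "Aut p q xs s = map (\<lambda>i. OppEnd p q (RLD_iter p q (take (Suc i) xs) s)) [0..<length xs]"

end

theory Submission
  imports Defs
begin

lemma Opp_in: "Opp p q y \<in> {p, q}"
  by (simp add: Opp_def)

lemma Opp_Opp: "p \<noteq> q \<Longrightarrow> y \<in> {p, q} \<Longrightarrow> Opp p q (Opp p q y) = y"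
  by (auto simp: Opp_def)

lemma RLD_append:
  assumes "p \<noteq> q" "y \<in> {p, q}"
  shows "RLD p q y (a @ b) = RLD p q y a @ RLD p q (if even (length a) then y else Opp p q y) b"
  using assms(2)
proof (induction a arbitrary: y)
  case Nil then show ?case by simp
next
  case (Cons c a)
  have "RLD p q (Opp p q y) (a @ b) = RLD p q (Opp p q y) a @
     RLD p q (if even (length a) then Opp p q y else Opp p q (Opp p q y)) b"
    using Cons.IH[OF Opp_in] .
  then show ?case using Opp_Opp[OF assms(1) Cons.prems] by simp
qed

lemma RLD_set: "y \<in> {p, q} \<Longrightarrow> set (RLD p q y a) \<subseteq> {p, q}"
proof (induction a arbitrary: y)
  case Nil then show ?case by simp
next
  case (Cons c a) then show ?case using Opp_in[of p q y] by auto
qed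

lemma RLD_nonempty: "a \<noteq> [] \<Longrightarrow> 0 \<notin> set a \<Longrightarrow> RLD p q y a \<noteq> []"
  by (cases a) auto

lemma RLD_last:
  assumes "p \<noteq> q"
  shows "a \<noteq> [] \<Longrightarrow> 0 \<notin> set a \<Longrightarrow> y \<in> {p, q} \<Longrightarrow>
    last (RLD p q y a) = (if odd (length a) then y else Opp p q y)"
proof (induction a arbitrary: y)
  case Nil then show ?case by simp
next
  case (Cons c a)
  show ?case
  proof (cases "a = []")
    case True then show ?thesis using Cons.prems by simp
  next
    case False
    have ne: "RLD p q (Opp p q y) a \<noteq> []" using RLD_nonempty False Cons.prems by auto
    have "last (RLD p q y (c # a)) = last (RLD p q (Opp p q y) a)"
      using ne by simp
    also have "\<dots> = (if odd (length a) then Opp p q y else Opp p q (Opp p q y))"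
      using Cons.IH[OF False _ Opp_in] Cons.prems by auto
    finally show ?thesis using Opp_Opp[OF assms Cons.prems(3)] by simp
  qed
qed

lemma RLD_iter_snoc: "RLD_iter p q (xs @ [y]) s = RLD p q y (RLD_iter p q xs s)"
  by (simp add: RLD_iter_def)

lemma RLD_iter_Nil: "RLD_iter p q [] s = s"
  by (simp add: RLD_iter_def)

lemma Aut_snoc: "Aut p q (xs @ [y]) t = Aut p q xs t @ [OppEnd p q (RLD_iter p q (xs @ [y]) t)]"
  unfolding Aut_def by simp

lemma RLD_iter_props:
  assumes "0 < p" "0 < q"
  shows "set xs \<subseteq> {p, q} \<Longrightarrow> t \<noteq> [] \<Longrightarrow> set t \<subseteq> {p, q} \<Longrightarrow>
    RLD_iter p q xs t \<noteq> [] \<and> set (RLD_iter p q xs t) \<subseteq> {p, q}"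
proof (induction xs rule: rev_induct)
  case Nil then show ?case by (simp add: RLD_iter_Nil)
next
  case (snoc y xs)
  then have IH: "RLD_iter p q xs t \<noteq> [] \<and> set (RLD_iter p q xs t) \<subseteq> {p, q}" by auto
  have z: "0 \<notin> set (RLD_iter p q xs t)" using IH assms by auto
  show ?case unfolding RLD_iter_snoc using RLD_nonempty[OF _ z] IH RLD_set snoc.prems by auto
qed

lemma main:
  assumes "0 < p" "0 < q" "p \<noteq> q"
  shows "set xs \<subseteq> {p, q} \<Longrightarrow> t \<noteq> [] \<Longrightarrow> set t \<subseteq> {p, q} \<Longrightarrow>
    RLD_iter p q xs (t @ u) = RLD_iter p q xs t @ RLD_iter p q (Aut p q xs t) u"
proof (induction xs rule: rev_induct)
  case Nil then show ?case by (simp add: RLD_iter_Nil Aut_def)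
next
  case (snoc y xs)
  define T where "T = RLD_iter p q xs t"
  define U where "U = RLD_iter p q (Aut p q xs t) u"
  have IH: "RLD_iter p q xs (t @ u) = T @ U" using snoc unfolding T_def U_def by auto
  have P: "T \<noteq> [] \<and> set T \<subseteq> {p, q}" unfolding T_def using RLD_iter_props[OF assms(1,2)] snoc.prems by auto
  have z: "0 \<notin> set T" using P assms by auto
  have y: "y \<in> {p, q}" using snoc.prems by auto
  have oe: "OppEnd p q (RLD p q y T) = (if even (length T) then y else Opp p q y)"
    unfolding OppEnd_def using RLD_last[OF assms(3) _ z y] P Opp_Opp[OF assms(3) y] by auto
  have "RLD_iter p q (xs @ [y]) (t @ u) = RLD p q y (T @ U)"
    unfolding RLD_iter_snoc IH ..
  also have "\<dots> = RLD p q y T @ RLD p q (if even (length T) then y else Opp p q y) U"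
    by (rule RLD_append[OF assms(3) y])
  also have "\<dots> = RLD_iter p q (xs @ [y]) t @ RLD_iter p q (Aut p q (xs @ [y]) t) u"
    by (simp only: Aut_snoc RLD_iter_snoc oe T_def[symmetric] U_def[symmetric])
  finally show ?case .
qed

theorem proposition1:
  fixes p q n :: nat and x s :: "nat list" and k :: nat
  assumes "0 < p" and "0 < q" and "p \<noteq> q"
    and "1 \<le> n"
    and "length x = n" and "set x \<subseteq> {p, q}"
    and "s \<noteq> []" and "set s \<subseteq> {p, q}"
    and "1 \<le> k" and "k \<le> length s"
  shows "RLD_iter p q x s =
           RLD_iter p q x (take k s) @ RLD_iter p q (Aut p q x (take k s)) (drop k s)"
proof -
  have ne: "take k s \<noteq> []" using assms(7,9) by (simp add: take_eq_Nil)
  have st: "set (take k s) \<subseteq> {p, q}" using set_take_subset[of k s] assms(8) by (rule subset_trans)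
  show ?thesis using main[OF assms(1,2,3) assms(6) ne st, of "drop k s"]
    by (simp only: append_take_drop_id)
qed

end
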